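(* Let $\theta_1,\dots,\theta_4\in\mathbb{R}$ and $\alpha,\beta\in\mathbb{R}$ with $\alpha^2=\beta^2$ and $\alpha\neq0$. Put $\widehat L=\exp\big(\tfrac12\theta_1\Gamma_{12}+\tfrac12\theta_2\Gamma_{34}+\tfrac12\theta_3\Gamma_{56}+\tfrac12\theta_4\Gamma_{78}+\tfrac12\alpha\Gamma_{0\natural}+\tfrac12\beta\Gamma_{9\natural}\big)\in\mathrm{Spin}_{10,1}$, $\widehat R^2=\prod_{k=1}^4(\cos\theta_k\,\mathbb{1}+\sin\theta_k\,\Gamma_{2k-1,2k})$, $\widehat N=\alpha\Gamma_{0\natural}+\beta\Gamma_{9\natural}$, and $\pi=\Gamma_0\Gamma_1\Gamma_3\Gamma_5\Gamma_7\Gamma_9$ (the Clifford element of the plane $e_0\wedge e_1\wedge e_3\wedge e_5\wedge e_7\wedge e_9$). Then: (i) $\widehat N^2=0$, $\widehat L^2=\widehat R^2(\mathbb{1}+\widehat N)$, and $\dim\ker\widehat N=16$; (ii) a spinor $\varepsilon\in\Delta$ satisfies both $\pi\cdot\varepsilon=\varepsilon$ and $\widehat L\pi\widehat L^{-1}\cdot\varepsilon=\varepsilon$ if and only if $\pi\cdot\varepsilon=\varepsilon$, $\widehat R^2\cdot\varepsilon=\varepsilon$ and $\widehat N\cdot\varepsilon=0$; (iii) the subspace $\Delta_0=\{\varepsilon\in\Delta:\widehat R^2\cdot\varepsilon=\varepsilon\}$ has dimension divisible by $4$, and $\dim\{\varepsilon:\pi\cdot\varepsilon=\varepsilon,\ \widehat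 R^2\cdot\varepsilon=\varepsilon,\ \widehat N\cdot\varepsilon=0\}=\tfrac14\dim\Delta_0=\tfrac12\dim\{\varepsilon:\pi\cdot\varepsilon=\varepsilon,\ \widehat R^2\cdot\varepsilon=\varepsilon\}$.
   Context: Let $\mathbb{M}^{10,1}$ be $\mathbb{R}^{11}$ with orthonormal basis $e_0,e_1,\dots,e_9,e_\natural$ and Lorentzian metric $\eta$ with $\eta(e_0,e_0)=-1$ and $\eta(e_M,e_M)=+1$ for $M\neq 0$. The Clifford algebra $\mathrm{C}\ell_{1,10}$ is generated by $\Gamma_M$, $M\in\{0,1,\dots,9,\natural\}$, with $\Gamma_M\Gamma_N+\Gamma_N\Gamma_M=2\eta_{MN}\mathbb{1}$; $\Gamma_{MN}=\Gamma_M\Gamma_N$ for $M\neq N$. $\Delta$ denotes the $32$-dimensional real irreducible representation of $\mathrm{C}\ell_{1,10}$ on which $\Gamma_0\Gamma_1\cdots\Gamma_9\Gamma_\natural=-\mathbb{1}$. (Physically: two $\mathsf{M}5$-branes with tangent planes $\pi$ and $L\pi$, $L$ the image of $\widehat L$ in $\mathrm{SO}^0_{10,1}$, a rotation in $\mathrm{SO}_8$ composed with a null rotation.) *)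

theory Defs
  imports "HOL-Analysis.Analysis"
begin

text \<open>Index convention: Clifford generators are indexed by nat; indices 0..9 are e_0..e_9 and
  index 10 stands for the eleventh direction (natural sign).\<close>

definition eta :: "nat \<Rightarrow> nat \<Rightarrow> real" where
  "eta M N = (if M \<noteq> N then 0 else if M = 0 then -1 else 1)"

definition matpow :: "real^'n^'n \<Rightarrow> nat \<Rightarrow> real^'n^'n" where
  "matpow A k = ((\<lambda>B. A ** B) ^^ k) (mat 1)"

definition mexp :: "real^'n^'n \<Rightarrow> real^'n^'n" where
  "mexp A = (\<Sum>k. (1 / fact k) *\<^sub>R matpow A k)"

definition clifford_rep :: "(nat \<Rightarrow> real^'n^'n) \<Rightarrow> bool" where
  "clifford_rep G \<longleftrightarrow>
     (\<forall>M<11. \<forall>N<11. G M ** G N + G N ** G M = (2 * eta M N) *\<^sub>R mat 1)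
     \<and> foldr (\<lambda>M P. G M ** P) [0..<11] (mat 1) = - mat 1"

end

theory Submission
  imports Defs
begin


typedef (overloaded) ('n::finite) endo = "UNIV :: ((real^'n) \<Rightarrow>\<^sub>L (real^'n)) set" by simp

setup_lifting type_definition_endo

instantiation endo :: (finite) real_normed_algebra_1
begin
lift_definition zero_endo :: "'a endo" is 0 .
lift_definition one_endo :: "'a endo" is id_blinfun .
lift_definition plus_endo :: "'a endo \<Rightarrow> 'a endo \<Rightarrow> 'a endo" is "(+)" .
lift_definition minus_endo :: "'a endo \<Rightarrow> 'a endo \<Rightarrow> 'a endo" is "(-)" .
lift_definition uminus_endo :: "'a endo \<Rightarrow> 'a endo" is "uminus" .
lift_definition times_endo :: "'a endo \<Rightarrow> 'a endo \<Rightarrow> 'a endo" is "(o\<^sub>L)" .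
lift_definition scaleR_endo :: "real \<Rightarrow> 'a endo \<Rightarrow> 'a endo" is "scaleR" .
lift_definition norm_endo :: "'a endo \<Rightarrow> real" is norm .
definition dist_endo :: "'a endo \<Rightarrow> 'a endo \<Rightarrow> real" where "dist_endo a b = norm (a - b)"
definition sgn_endo :: "'a endo \<Rightarrow> 'a endo" where "sgn_endo x = scaleR (inverse (norm x)) x"
definition uniformity_endo :: "('a endo \<times> 'a endo) filter"
  where "uniformity_endo = (INF e\<in>{0 <..}. principal {(x, y). dist x y < e})"
definition open_endo :: "'a endo set \<Rightarrow> bool"
  where "open_endo S = (\<forall>x\<in>S. \<forall>\<^sub>F (x', y) in uniformity. x' = x \<longrightarrow> y \<in> S)"
instance
proof
  fix a b c :: "'a endo" and r s :: real
  show "a + b + c = a + (b + c)" by transfer (simp add: algebra_simps)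
  show "a + b = b + a" by transfer (simp add: algebra_simps)
  show "0 + a = a" by transfer simp
  show "- a + a = 0" by transfer simp
  show "a - b = a + - b" by transfer simp
  show "r *\<^sub>R (a + b) = r *\<^sub>R a + r *\<^sub>R b" by transfer (simp add: algebra_simps)
  show "(r + s) *\<^sub>R a = r *\<^sub>R a + s *\<^sub>R a" by transfer (simp add: algebra_simps)
  show "r *\<^sub>R s *\<^sub>R a = (r * s) *\<^sub>R a" by transfer simp
  show "1 *\<^sub>R a = a" by transfer simp
  show "a * b * c = a * (b * c)" by transfer (auto intro!: blinfun_eqI)
  show "(a + b) * c = a * c + b * c" by transfer (simp add: blinfun.bilinear_simps bounded_bilinear.add_left[OF bounded_bilinear_blinfun_compose])
  show "a * (b + c) = a * b + a * c" by transfer (simp add: bounded_bilinear.add_right[OF bounded_bilinear_blinfun_compose])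
  show "1 * a = a" by transfer (auto intro!: blinfun_eqI)
  show "a * 1 = a" by transfer (auto intro!: blinfun_eqI)
  show "(0::'a endo) \<noteq> 1"
  proof transfer
    have "blinfun_apply (0::(real^'a) \<Rightarrow>\<^sub>L (real^'a)) 1 \<noteq> blinfun_apply id_blinfun 1" by simp
    then show "(0::(real^'a) \<Rightarrow>\<^sub>L (real^'a)) \<noteq> id_blinfun" by metis
  qed
  show "r *\<^sub>R a * b = r *\<^sub>R (a * b)" by transfer (simp add: bounded_bilinear.scaleR_left[OF bounded_bilinear_blinfun_compose])
  show "a * r *\<^sub>R b = r *\<^sub>R (a * b)" by transfer (simp add: bounded_bilinear.scaleR_right[OF bounded_bilinear_blinfun_compose])
  show "norm (a * b) \<le> norm a * norm b" by transfer (rule norm_blinfun_compose)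
  show "norm (1::'a endo) = 1" by transfer simp
  show "dist a b = norm (a - b)" by (simp add: dist_endo_def)
  show "sgn a = inverse (norm a) *\<^sub>R a" by (simp add: sgn_endo_def)
  show "(uniformity :: ('a endo \<times> 'a endo) filter) = (INF e\<in>{0 <..}. principal {(x, y). dist x y < e})" by (simp add: uniformity_endo_def)
  fix S :: "'a endo set"
  show "open S = (\<forall>x\<in>S. \<forall>\<^sub>F (x', y) in uniformity. x' = x \<longrightarrow> y \<in> S)" by (simp add: open_endo_def)
  show "(norm a = 0) = (a = 0)" by transfer simp
  show "norm (a + b) \<le> norm a + norm b" by transfer (rule norm_triangle_ineq)
  show "norm (r *\<^sub>R a) = \<bar>r\<bar> * norm a" by transfer simp
qed
end

instance endo :: (finite) banach
proof
  fix X :: "nat \<Rightarrow> 'a endo"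
  assume "Cauchy X"
  then have "Cauchy (\<lambda>k. Rep_endo (X k))"
    unfolding Cauchy_def dist_norm by (simp add: norm_endo.rep_eq minus_endo.rep_eq)
  then obtain l where "(\<lambda>k. Rep_endo (X k)) \<longlonglongrightarrow> l"
    using convergent_def Cauchy_convergent_iff by blast
  then have "X \<longlonglongrightarrow> Abs_endo l"
    unfolding LIMSEQ_def dist_norm
    by (simp add: norm_endo.rep_eq minus_endo.rep_eq Abs_endo_inverse)
  then show "convergent X" by (auto simp: convergent_def)
qed


lift_definition app :: "'n::finite endo \<Rightarrow> real^'n \<Rightarrow> real^'n" is blinfun_apply .

lift_definition Em :: "real^'n^'n \<Rightarrow> 'n::finite endo" is "\<lambda>A. Blinfun (\<lambda>x. A *v x)" .

lemma bl_mat: "bounded_linear (\<lambda>x. (A::real^'n::finite^'n) *v x)"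
  by (simp add: linear_conv_bounded_linear)

lemma app_Em[simp]: "app (Em A) v = A *v v"
  by transfer (simp add: bounded_linear_Blinfun_apply bl_mat)

lemma app_mult[simp]: "app (x * y) v = app x (app y v)" by transfer simp
lemma app_one[simp]: "app 1 v = v" by transfer simp
lemma app_zero[simp]: "app 0 v = 0" by transfer simp
lemma app_add[simp]: "app (x + y) v = app x v + app y v" by transfer (simp add: blinfun.bilinear_simps)
lemma app_diff[simp]: "app (x - y) v = app x v - app y v" by transfer (simp add: blinfun.bilinear_simps)
lemma app_uminus[simp]: "app (- x) v = - app x v" by transfer (simp add: blinfun.bilinear_simps)
lemma app_scaleR[simp]: "app (r *\<^sub>R x) v = r *\<^sub>R app x v" by transfer (simp add: blinfun.bilinear_simps)
lemma app_vadd[simp]: "app x (v + w) = app x v + app x w" by transfer (simp add: blinfun.bilinear_simps)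
lemma app_vdiff[simp]: "app x (v - w) = app x v - app x w" by transfer (simp add: blinfun.bilinear_simps)
lemma app_vuminus[simp]: "app x (- v) = - app x v" by transfer (simp add: blinfun.bilinear_simps)
lemma app_vscaleR[simp]: "app x (r *\<^sub>R v) = r *\<^sub>R app x v" by transfer (simp add: blinfun.bilinear_simps)
lemma app_vzero[simp]: "app x 0 = 0" by transfer (simp add: blinfun.bilinear_simps)
lemma app_linear: "linear (app x)" by transfer (simp add: bounded_linear.linear[OF blinfun.bounded_linear_right])
lemma endo_eqI: "(\<And>v. app x v = app y v) \<Longrightarrow> x = y"
  by transfer (auto intro: blinfun_eqI)

lemma Em_mult: "Em (A ** B) = Em A * Em B"
  by (rule endo_eqI) (simp add: matrix_vector_mul_assoc)
lemma Em_add: "Em (A + B) = Em A + Em B"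
  by (rule endo_eqI) (simp add: matrix_vector_mult_add_rdistrib)
lemma Em_diff: "Em (A - B) = Em A - Em B"
  by (rule endo_eqI) (simp add: matrix_vector_mult_diff_rdistrib)
lemma Em_scaleR: "Em (r *\<^sub>R A) = r *\<^sub>R Em A"
  by (rule endo_eqI) (simp add: scaleR_matrix_vector_assoc)
lemma Em_one: "Em (mat 1) = 1"
  by (rule endo_eqI) simp
lemma Em_zero: "Em 0 = 0"
  by (rule endo_eqI) simp
lemma Em_inj: "Em A = Em B \<Longrightarrow> A = B"
  by (metis app_Em matrix_eq)

definition Fm :: "'n::finite endo \<Rightarrow> real^'n^'n" where "Fm T = matrix (app T)"

lemma Em_Fm[simp]: "Em (Fm T) = T"
  proof (rule endo_eqI)
  fix v show "app (Em (Fm T)) v = app T v"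
    using matrix_works[of "app T" v] app_linear[of T] by (simp add: Fm_def linear_linear)
qed

lemma Fm_Em[simp]: "Fm (Em A) = A"
proof -
  have "app (Em A) = (\<lambda>x. A *v x)" by (rule ext) simp
  then show ?thesis by (simp add: Fm_def)
qed

lemma Fm_add: "Fm (x + y) = Fm x + Fm y"
  by (metis Em_Fm Em_add Em_inj)
lemma Fm_scaleR: "Fm (r *\<^sub>R x) = r *\<^sub>R Fm x"
  by (metis Em_Fm Em_scaleR Em_inj)
lemma Fm_sum: "Fm (sum f S) = sum (\<lambda>k. Fm (f k)) S"
  by (induction S rule: infinite_finite_induct) (simp_all add: Fm_add, metis Em_Fm Em_inj Em_zero, metis Em_Fm Em_inj Em_zero)

lemma bl_app_left: "bounded_linear (\<lambda>T::'n::finite endo. app T v)"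
proof (rule bounded_linear_intro[where K="norm v"])
  fix x y :: "'n endo" and r :: real
  show "app (x + y) v = app x v + app y v" by simp
  show "app (r *\<^sub>R x) v = r *\<^sub>R app x v" by simp
  show "norm (app x v) \<le> norm x * norm v" by transfer (rule norm_blinfun)
qed

lemma tendsto_Fm: "(X \<longlongrightarrow> l) F \<Longrightarrow> ((\<lambda>n. Fm (X n)) \<longlongrightarrow> Fm l) F"
  unfolding Fm_def matrix_def
  by (intro vec_tendstoI) (simp add: tendsto_vec_nth bounded_linear.tendsto[OF bl_app_left])

lemma matpow_Em: "Em (matpow A k) = Em A ^ k"
  by (induction k) (simp_all add: matpow_def Em_one Em_mult)

lemma Em_mexp: "Em (mexp A) = exp (Em A)"
proof -
  let ?x = "Em A"
  have s: "(\<lambda>n. ?x^n /\<^sub>R fact n) sums exp ?x"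
    unfolding exp_def using summable_exp_generic summable_sums by blast
  have "(\<lambda>n. (1 / fact n) *\<^sub>R matpow A n) sums Fm (exp ?x)"
  proof -
    have t: "(\<lambda>n. Fm (\<Sum>k<n. ?x^k /\<^sub>R fact k)) \<longlonglongrightarrow> Fm (exp ?x)"
      using s unfolding sums_def by (rule tendsto_Fm)
    have "Fm (\<Sum>k<n. ?x^k /\<^sub>R fact k) = (\<Sum>k<n. (1 / fact k) *\<^sub>R matpow A k)" for n
      by (simp add: Fm_sum Fm_scaleR divide_inverse_commute) (metis Fm_Em matpow_Em)
    then show ?thesis using t unfolding sums_def by simp
  qed
  then have "mexp A = Fm (exp ?x)" unfolding mexp_def by (rule sums_unique[symmetric])
  then show ?thesis by simp
qed



locale cliff = fixes g :: "nat \<Rightarrow> 'a::real_algebra_1"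
  assumes anti: "i < 11 \<Longrightarrow> j < 11 \<Longrightarrow> i \<noteq> j \<Longrightarrow> g i * g j = - (g j * g i)"
  and sq0: "g 0 * g 0 = -1" and sq: "0 < i \<Longrightarrow> i < 11 \<Longrightarrow> g i * g i = 1"
begin
lemma sw: "j < i \<Longrightarrow> i < 11 \<Longrightarrow> g i * g j = - (g j * g i)"
  by (rule anti) auto
lemma sw2: "j < i \<Longrightarrow> i < 11 \<Longrightarrow> g i * (g j * x) = - (g j * (g i * x))"
  by (simp add: mult.assoc[symmetric] sw)
lemma sq0': "g 0 * (g 0 * x) = - x"
  by (simp add: mult.assoc[symmetric] sq0)
lemma sq': "0 < i \<Longrightarrow> i < 11 \<Longrightarrow> g i * (g i * x) = x"
  by (simp add: mult.assoc[symmetric] sq)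
lemmas nf = mult.assoc sw sw2 sq0 sq0' sq sq'

definition "J1 = g 1 * g 2"
definition "J2 = g 3 * g 4"
definition "J3 = g 5 * g 6"
definition "J4 = g 7 * g 8"
definition "p = g 0 * g 1 * g 3 * g 5 * g 7 * g 9"
definition "K = g 0 * g 9"
definition "A3 = g 0 * g 1 * g 2"
definition "n0 = g 0 * g 10"
definition "n9 = g 9 * g 10"
lemmas defs = J1_def J2_def J3_def J4_def p_def K_def A3_def n0_def n9_def

lemma JJ: "J1 * J1 = -1" "J2 * J2 = -1" "J3 * J3 = -1" "J4 * J4 = -1"
  by (simp_all add: defs nf)
lemma Jcomm: "J1 * J2 = J2 * J1" "J1 * J3 = J3 * J1" "J1 * J4 = J4 * J1"
   "J2 * J3 = J3 * J2" "J2 * J4 = J4 * J2" "J3 * J4 = J4 * J3"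
  by (simp_all add: defs nf)
lemma pJ: "p * J1 = - J1 * p" "p * J2 = - J2 * p" "p * J3 = - J3 * p" "p * J4 = - J4 * p"
  by (simp_all add: defs nf)
lemma pn: "p * n0 = - n0 * p" "p * n9 = - n9 * p"
  by (simp_all add: defs nf)
lemma pp: "p * p = 1" by (simp add: defs nf)
lemma Jn: "J1 * n0 = n0 * J1" "J2 * n0 = n0 * J2" "J3 * n0 = n0 * J3" "J4 * n0 = n0 * J4"
   "J1 * n9 = n9 * J1" "J2 * n9 = n9 * J2" "J3 * n9 = n9 * J3" "J4 * n9 = n9 * J4"
  by (simp_all add: defs nf)
lemma nn: "n0 * n0 = 1" "n9 * n9 = -1" "n0 * n9 + n9 * n0 = 0"
  by (simp_all add: defs nf)
lemma g9J: "g 9 * J1 = J1 * g 9" "g 9 * J2 = J2 * g 9" "g 9 * J3 = J3 * g 9" "g 9 * J4 = J4 * g 9"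
  "g 9 * p = - p * g 9" "g 9 * g 9 = 1"
  by (simp_all add: defs nf)
lemma KJ: "K * J1 = J1 * K" "K * J2 = J2 * K" "K * J3 = J3 * K" "K * J4 = J4 * K"
  "K * p = p * K" "K * K = 1" "g 0 * K = - K * g 0" "g 0 * g 0 = -1"
  by (simp_all add: defs nf)
lemma A3J: "A3 * J1 = J1 * A3" "A3 * J2 = J2 * A3" "A3 * J3 = J3 * A3" "A3 * J4 = J4 * A3"
  "A3 * p = p * A3" "A3 * K = - K * A3" "A3 * A3 = 1"
  by (simp_all add: defs nf)
lemma kerN: "g 10 * (g 0 * (a *\<^sub>R n0 + b *\<^sub>R n9)) = b *\<^sub>R K - a *\<^sub>R 1"
  by (simp add: defs nf algebra_simps)
lemma g10: "g 10 * g 10 = 1" by (simp add: nf)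
end


lemma exp_conj:
  fixes a x y :: "'a::{real_normed_algebra_1,banach}"
  assumes "a * x = y * a"
  shows "a * exp x = exp y * a"
proof -
  have pw: "a * x ^ k = y ^ k * a" for k
    by (induction k) (simp_all add: mult.assoc[symmetric] assms, metis assms mult.assoc power_commutes)
  have "a * exp x = (\<Sum>k. a * (x ^ k /\<^sub>R fact k))"
    unfolding exp_def by (rule suminf_mult[symmetric]) (rule summable_exp_generic)
  also have "\<dots> = (\<Sum>k. (y ^ k /\<^sub>R fact k) * a)"
    by (simp add: pw)
  also have "\<dots> = exp y * a"
    unfolding exp_def by (rule suminf_mult2[symmetric]) (rule summable_exp_generic)
  finally show ?thesis .
qed

lemma exp_nil:
  fixes n :: "'a::{real_normed_algebra_1,banach}"
  assumes "n * n = 0"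
  shows "exp n = 1 + n"
proof -
  have z: "k \<notin> {0,1} \<Longrightarrow> n ^ k /\<^sub>R fact k = 0" for k :: nat
  proof -
    assume "k \<notin> {0,1}"
    then obtain m where "k = Suc (Suc m)" by (metis insertCI not0_implies_Suc One_nat_def)
    then show ?thesis by (simp add: mult.assoc[symmetric] assms)
  qed
  have "exp n = (\<Sum>k\<in>{0,1}. n ^ k /\<^sub>R fact k)"
    unfolding exp_def by (rule suminf_finite) (use z in auto)
  then show ?thesis by simp
qed

definition cplx_hom :: "'a::real_algebra_1 \<Rightarrow> complex \<Rightarrow> 'a" where
  "cplx_hom J z = Re z *\<^sub>R 1 + Im z *\<^sub>R J"

lemma exp_J:
  fixes J :: "'a::{real_normed_algebra_1,banach}"
  assumes JJ: "J * J = -1"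
  shows "exp (t *\<^sub>R J) = cos t *\<^sub>R 1 + sin t *\<^sub>R J"
proof -
  let ?f = "cplx_hom J"
  have bl: "bounded_linear ?f"
  proof (rule bounded_linear_intro[where K="1 + norm J"])
    fix z w :: complex and r :: real
    show "?f (z + w) = ?f z + ?f w" by (simp add: cplx_hom_def algebra_simps)
    show "?f (r *\<^sub>R z) = r *\<^sub>R ?f z" by (simp add: cplx_hom_def algebra_simps)
    have "norm (?f z) \<le> norm (Re z *\<^sub>R (1::'a)) + norm (Im z *\<^sub>R J)"
      unfolding cplx_hom_def by (rule norm_triangle_ineq)
    also have "\<dots> = \<bar>Re z\<bar> + \<bar>Im z\<bar> * norm J" by simp
    also have "\<dots> \<le> norm z + norm z * norm J"
      by (intro add_mono mult_right_mono abs_Re_le_cmod abs_Im_le_cmod) simp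
    finally show "norm (?f z) \<le> norm z * (1 + norm J)" by (simp add: algebra_simps)
  qed
  have sc: "?f (r *\<^sub>R z) = r *\<^sub>R ?f z" for r z by (simp add: cplx_hom_def algebra_simps)
  have mult: "?f (z * w) = ?f z * ?f w" for z w
    apply (simp add: cplx_hom_def algebra_simps JJ scaleR_scaleR[symmetric] del: scaleR_scaleR)
    apply (simp only: scaleR_scaleR mult.commute)
    done
  have pw: "?f (z ^ k) = (?f z) ^ k" for z k
    by (induction k) (simp_all add: mult, simp add: cplx_hom_def)
  have s: "(\<lambda>k. z ^ k /\<^sub>R fact k) sums exp z" for z :: complex
    unfolding exp_def using summable_exp_generic summable_sums by blast
  have "(\<lambda>k. ?f (z ^ k /\<^sub>R fact k)) sums ?f (exp z)" for z
    by (rule bounded_linear.sums[OF bl s])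
  then have "(\<lambda>k. (?f z) ^ k /\<^sub>R fact k) sums ?f (exp z)" for z
    by (simp add: sc pw)
  then have e: "exp (?f z) = ?f (exp z)" for z
    unfolding exp_def by (simp add: sums_iff)
  have "?f (\<i> * complex_of_real t) = t *\<^sub>R J" by (simp add: cplx_hom_def)
  moreover have "exp (\<i> * complex_of_real t) = cis t" by (simp add: cis_conv_exp)
  ultimately show ?thesis using e[of "\<i> * complex_of_real t"] by (simp add: cplx_hom_def)
qed



definition goodform :: "(real^'n \<Rightarrow> real^'n \<Rightarrow> real) \<Rightarrow> bool" where
  "goodform B \<longleftrightarrow> (\<forall>u v w. B (u + v) w = B u w + B v w) \<and> (\<forall>c v w. B (c *\<^sub>R v) w = c * B v w)
     \<and> (\<forall>v w. B v w = B w v) \<and> (\<forall>v. 0 \<le> B v v) \<and> (\<forall>v. B v v = 0 \<longrightarrow> v = 0)"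

definition invar :: "(real^'n \<Rightarrow> real^'n \<Rightarrow> real) \<Rightarrow> 'n::finite endo \<Rightarrow> bool" where
  "invar B T \<longleftrightarrow> (\<forall>v w. B (app T v) (app T w) = B v w)"

lemma gf_rules:
  assumes "goodform B"
  shows "B (u + v) w = B u w + B v w" "B (c *\<^sub>R v) w = c * B v w"
    "B w (u + v) = B w u + B w v" "B w (c *\<^sub>R v) = c * B w v"
    "B (- v) w = - B v w" "B w (- v) = - B w v"
    "B (u - v) w = B u w - B v w" "B w (u - v) = B w u - B w v"
proof -
  have l: "B (u + v) w = B u w + B v w" "B (c *\<^sub>R v) w = c * B v w" for u v w c
    using assms unfolding goodform_def by auto
  have sym: "B v w = B w v" for v w using assms unfolding goodform_def by auto
  have n: "B (- v) w = - B v w" for v w using l(2)[of "-1" v w] by simp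
  show "B (u + v) w = B u w + B v w" "B (c *\<^sub>R v) w = c * B v w" by (rule l)+
  show "B w (u + v) = B w u + B w v" by (simp add: sym[of w] l)
  show "B w (c *\<^sub>R v) = c * B w v" by (simp add: sym[of w] l)
  show "B (- v) w = - B v w" by (rule n)
  show "B w (- v) = - B w v" by (simp add: sym[of w] n)
  show "B (u - v) w = B u w - B v w" using l(1)[of u "-v" w] n by simp
  show "B w (u - v) = B w u - B w v" using l(1)[of u "-v" w] n by (simp add: sym[of w])
qed

lemma gf_inner: "goodform (\<lambda>v w. inner v (w::real^'n))"
  unfolding goodform_def by (auto simp: inner_add_left intro: inner_commute)

lemma gf_step:
  fixes J :: "'n::finite endo"
  assumes B: "goodform B" and JJ: "J * J = -1"
  defines "B' \<equiv> \<lambda>v w. B v w + B (app J v) (app J w)"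
  shows "goodform B'" "invar B' J" "\<And>T. T * J = J * T \<Longrightarrow> invar B T \<Longrightarrow> invar B' T"
proof -
  note r = gf_rules[OF B]
  have pos: "0 \<le> B v v" and z: "B v v = 0 \<Longrightarrow> v = 0" and sym: "B v w = B w v" for v w
    using B unfolding goodform_def by auto
  show "goodform B'"
    unfolding goodform_def B'_def
  proof (intro conjI allI impI)
    fix u v w :: "real^'n" and c :: real
    show "B (u + v) w + B (app J (u + v)) (app J w) = B u w + B (app J u) (app J w) + (B v w + B (app J v) (app J w))"
      by (simp add: r)
    show "B (c *\<^sub>R v) w + B (app J (c *\<^sub>R v)) (app J w) = c * (B v w + B (app J v) (app J w))"
      by (simp add: r algebra_simps)
    show "B v w + B (app J v) (app J w) = B w v + B (app J w) (app J v)" by (simp add: sym[of v] sym[of "app J v"])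
    show "0 \<le> B v v + B (app J v) (app J v)" using pos[of v] pos[of "app J v"] by simp
    assume "B v v + B (app J v) (app J v) = 0"
    then have "B v v = 0" using pos[of v] pos[of "app J v"] by simp
    then show "v = 0" by (rule z)
  qed
  have JJv: "app J (app J v) = - v" for v using arg_cong[OF JJ, of "\<lambda>x. app x v"] by simp
  show "invar B' J" unfolding invar_def B'_def by (simp add: JJv r)
  fix T assume TJ: "T * J = J * T" and iT: "invar B T"
  have c: "app J (app T v) = app T (app J v)" for v using arg_cong[OF TJ, of "\<lambda>x. app x v"] by simp
  show "invar B' T" using iT unfolding invar_def B'_def by (simp add: c)
qed

lemma invar_mult: "invar B S \<Longrightarrow> invar B T \<Longrightarrow> invar B (S * T)"
  unfolding invar_def by simp

lemma invar_rot:
  fixes J :: "'n::finite endo"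
  assumes B: "goodform B" and JJ: "J * J = -1" and iJ: "invar B J"
  shows "invar B (cos t *\<^sub>R 1 + sin t *\<^sub>R J)"
proof -
  note r = gf_rules[OF B]
  have JJv: "app J (app J v) = - v" for v using arg_cong[OF JJ, of "\<lambda>x. app x v"] by simp
  have inv: "B (app J v) (app J w) = B v w" for v w using iJ unfolding invar_def by simp
  have anti: "B v (app J w) = - B (app J v) w" for v w
    using inv[of v "app J w"] by (simp add: JJv r)
  have "B (cos t *\<^sub>R v + sin t *\<^sub>R app J v) (cos t *\<^sub>R w + sin t *\<^sub>R app J w) = (cos t ^ 2 + sin t ^ 2) * B v w" for v w
  proof -
    have h: "cos t * cos t * X + sin t * sin t * X = X" for X
      by (metis distrib_right mult_1 sin_cos_squared_add3)
    have "B (cos t *\<^sub>R v + sin t *\<^sub>R app J v) (cos t *\<^sub>R w + sin t *\<^sub>R app J w)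
      = cos t * cos t * B v w + cos t * sin t * (B v (app J w) + B (app J v) w) + sin t * sin t * B (app J v) (app J w)"
      by (simp add: r algebra_simps)
    also have "\<dots> = (cos t ^ 2 + sin t ^ 2) * B v w" using anti[of v w] inv[of v w]
      by (simp add: h)
    finally show ?thesis .
  qed
  then show ?thesis unfolding invar_def by simp
qed

lemma form_kill:
  fixes r :: "'n::finite endo"
  assumes B: "goodform B" and ir: "invar B r" and e: "app r e = e - d" and d: "app r d = d"
  shows "d = 0"
proof -
  note rr = gf_rules[OF B]
  have "B (app r e) (app r d) = B e d" using ir unfolding invar_def by simp
  then have "B d d = 0" by (simp add: e d rr)
  then show ?thesis using B unfolding goodform_def by auto
qed

lemma dim_split:
  fixes K A :: "'n::finite endo" and V :: "(real^'n) set"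
  assumes V: "subspace V"
    and KV: "\<And>v. v \<in> V \<Longrightarrow> app K v \<in> V" and KK: "K * K = 1"
    and AV: "\<And>v. v \<in> V \<Longrightarrow> app A v \<in> V" and AA: "A * A = c *\<^sub>R 1" and c: "c \<noteq> 0"
    and AK: "A * K = - K * A"
  shows "2 * dim {v \<in> V. app K v = v} = dim V"
proof -
  define Vp where "Vp = {v \<in> V. app K v = v}"
  define Vm where "Vm = {v \<in> V. app K v = - v}"
  have KKv: "app K (app K v) = v" for v using arg_cong[OF KK, of "\<lambda>x. app x v"] by simp
  have AAv: "app A (app A v) = c *\<^sub>R v" for v using arg_cong[OF AA, of "\<lambda>x. app x v"] by simp
  have AKv: "app A (app K v) = - app K (app A v)" for v using arg_cong[OF AK, of "\<lambda>x. app x v"] by simp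
  have KAv: "app K (app A v) = - app A (app K v)" for v using AKv[of v] by simp
  have sp: "subspace Vp" "subspace Vm"
    unfolding Vp_def Vm_def subspace_def using V[unfolded subspace_def] by auto
  have injA: "inj_on (app A) S" for S
  proof (rule inj_onI)
    fix x y assume "app A x = app A y"
    then have "app A (app A x) = app A (app A y)" by simp
    then show "x = y" using c by (simp add: AAv)
  qed
  have "app A ` Vp \<subseteq> Vm" unfolding Vp_def Vm_def using AV by (auto simp: KAv)
  then have "dim (app A ` Vp) \<le> dim Vm" by (rule dim_subset)
  moreover have "dim (app A ` Vp) = dim Vp" by (rule dim_image_eq[OF app_linear injA])
  moreover have "app A ` Vm \<subseteq> Vp" unfolding Vp_def Vm_def using AV by (auto simp: KAv)
  then have "dim (app A ` Vm) \<le> dim Vp" by (rule dim_subset)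
  moreover have "dim (app A ` Vm) = dim Vm" by (rule dim_image_eq[OF app_linear injA])
  ultimately have eq: "dim Vp = dim Vm" by simp
  have int: "Vp \<inter> Vm = {0}"
  proof -
    have "v = 0" if "v \<in> Vp" "v \<in> Vm" for v
    proof -
      from that have "v = - v" by (auto simp: Vp_def Vm_def)
      then have "(2::real) *\<^sub>R v = 0" by (metis add.right_inverse scaleR_2)
      then show "v = 0" by simp
    qed
    then show ?thesis using sp subspace_0 by blast
  qed
  have sum: "{x + y |x y. x \<in> Vp \<and> y \<in> Vm} = V"
  proof
    show "{x + y |x y. x \<in> Vp \<and> y \<in> Vm} \<subseteq> V" unfolding Vp_def Vm_def using V subspace_add by blast
    show "V \<subseteq> {x + y |x y. x \<in> Vp \<and> y \<in> Vm}"
    proof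
      fix v assume v: "v \<in> V"
      let ?x = "(1/2) *\<^sub>R (v + app K v)" and ?y = "(1/2) *\<^sub>R (v - app K v)"
      have "?x \<in> Vp" unfolding Vp_def using v KV V by (auto simp: KKv subspace_add subspace_scale algebra_simps)
      moreover have "?y \<in> Vm" unfolding Vm_def using v KV V by (auto simp: KKv subspace_diff subspace_scale algebra_simps)
      moreover have "v = ?x + ?y" by (simp add: algebra_simps scaleR_2[symmetric])
      ultimately show "v \<in> {x + y |x y. x \<in> Vp \<and> y \<in> Vm}" by blast
    qed
  qed
  have "dim V + dim (Vp \<inter> Vm) = dim Vp + dim Vm" using dim_sums_Int[OF sp] sum by simp
  then show ?thesis using int eq Vp_def by simp
qed



lemma dbl: fixes x :: "'a::real_vector" assumes "x + x = (2 * a) *\<^sub>R y" shows "x = a *\<^sub>R y"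
proof -
  have "(2::real) *\<^sub>R x = (2::real) *\<^sub>R (a *\<^sub>R y)" using assms by (metis scaleR_2 scaleR_scaleR)
  then show ?thesis by (rule scaleR_left_imp_eq[rotated]) simp
qed

lemma comm_rot: fixes x J :: "'a::real_algebra_1"
  shows "x * J = J * x \<Longrightarrow> x * (c *\<^sub>R 1 + s *\<^sub>R J) = (c *\<^sub>R 1 + s *\<^sub>R J) * x"
  by (simp add: algebra_simps)
lemma comm_rot': fixes x J :: "'a::real_algebra_1"
  shows "x * J = J * x \<Longrightarrow> x * (c *\<^sub>R 1 - s *\<^sub>R J) = (c *\<^sub>R 1 - s *\<^sub>R J) * x"
  by (simp add: algebra_simps)
lemma acomm_rot: fixes x J :: "'a::real_algebra_1"
  shows "x * J = - J * x \<Longrightarrow> x * (c *\<^sub>R 1 + s *\<^sub>R J) = (c *\<^sub>R 1 - s *\<^sub>R J) * x"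
  by (simp add: algebra_simps)
lemma comm_mul: fixes x a b :: "'a::monoid_mult"
  shows "x * a = a * x \<Longrightarrow> x * b = b * x \<Longrightarrow> x * (a * b) = (a * b) * x"
  by (metis mult.assoc)
lemma rot_inv: fixes J :: "'a::real_algebra_1"
  assumes "J * J = -1"
  shows "(cos t *\<^sub>R 1 + sin t *\<^sub>R J) * (cos t *\<^sub>R 1 - sin t *\<^sub>R J) = 1"
    "(cos t *\<^sub>R 1 - sin t *\<^sub>R J) * (cos t *\<^sub>R 1 + sin t *\<^sub>R J) = 1"
proof -
  have h: "(cos t * cos t) *\<^sub>R (1::'a) + (sin t * sin t) *\<^sub>R 1 = 1"
    by (simp only: sin_cos_squared_add3 scaleR_one flip: scaleR_add_left)
  show "(cos t *\<^sub>R 1 + sin t *\<^sub>R J) * (cos t *\<^sub>R 1 - sin t *\<^sub>R J) = 1"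
    using h by (simp add: algebra_simps assms)
  show "(cos t *\<^sub>R 1 - sin t *\<^sub>R J) * (cos t *\<^sub>R 1 + sin t *\<^sub>R J) = 1"
    using h by (simp add: algebra_simps assms)
qed
lemma rot_comm: fixes J1 J2 :: "'a::real_algebra_1"
  assumes "J1 * J2 = J2 * J1"
  shows "(a *\<^sub>R 1 + b *\<^sub>R J1) * (c *\<^sub>R 1 + d *\<^sub>R J2) = (c *\<^sub>R 1 + d *\<^sub>R J2) * (a *\<^sub>R 1 + b *\<^sub>R J1)"
    "(a *\<^sub>R 1 + b *\<^sub>R J1) * (c *\<^sub>R 1 - d *\<^sub>R J2) = (c *\<^sub>R 1 - d *\<^sub>R J2) * (a *\<^sub>R 1 + b *\<^sub>R J1)"
    "(a *\<^sub>R 1 - b *\<^sub>R J1) * (c *\<^sub>R 1 + d *\<^sub>R J2) = (c *\<^sub>R 1 + d *\<^sub>R J2) * (a *\<^sub>R 1 - b *\<^sub>R J1)"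
  using assms by (simp_all add: algebra_simps)

lemma form_exists:
  fixes J1 J2 J3 J4 :: "'n::finite endo"
  assumes "J1 * J1 = -1" "J2 * J2 = -1" "J3 * J3 = -1" "J4 * J4 = -1"
   "J1 * J2 = J2 * J1" "J1 * J3 = J3 * J1" "J1 * J4 = J4 * J1"
   "J2 * J3 = J3 * J2" "J2 * J4 = J4 * J2" "J3 * J4 = J4 * J3"
  shows "\<exists>B. goodform B \<and> invar B J1 \<and> invar B J2 \<and> invar B J3 \<and> invar B J4"
proof -
  note s1 = gf_step[OF gf_inner assms(1)]
  note s2 = gf_step[OF s1(1) assms(2)]
  note s3 = gf_step[OF s2(1) assms(3)]
  note s4 = gf_step[OF s3(1) assms(4)]
  note i2 = s2(3)[OF assms(5) s1(2)]
  note i3 = s3(3)[OF assms(6) i2] s3(3)[OF assms(8) s2(2)]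
  note i4 = s4(3)[OF assms(7) i3(1)] s4(3)[OF assms(9) i3(2)] s4(3)[OF assms(10) s3(2)]
  show ?thesis using s4(1) s4(2) i4 by blast
qed

lemma sub_fix: "subspace {v. app (T::'n::finite endo) v = v}"
  unfolding subspace_def by simp



theorem mainTheorem3:
  fixes G :: "nat \<Rightarrow> real^'n^'n"
    and \<theta>1 \<theta>2 \<theta>3 \<theta>4 \<alpha> \<beta> :: real
    and L R2 N P :: "real^'n^'n"
  assumes dim32: "CARD('n) = 32"
    and rep: "clifford_rep G"
    and ab: "\<alpha>^2 = \<beta>^2" and a0: "\<alpha> \<noteq> 0"
    and L_def: "L = mexp ((\<theta>1/2) *\<^sub>R (G 1 ** G 2) + (\<theta>2/2) *\<^sub>R (G 3 ** G 4)
                 + (\<theta>3/2) *\<^sub>R (G 5 ** G 6) + (\<theta>4/2) *\<^sub>R (G 7 ** G 8)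
                 + (\<alpha>/2) *\<^sub>R (G 0 ** G 10) + (\<beta>/2) *\<^sub>R (G 9 ** G 10))"
    and R2_def: "R2 = (cos \<theta>1 *\<^sub>R mat 1 + sin \<theta>1 *\<^sub>R (G 1 ** G 2))
                   ** (cos \<theta>2 *\<^sub>R mat 1 + sin \<theta>2 *\<^sub>R (G 3 ** G 4))
                   ** (cos \<theta>3 *\<^sub>R mat 1 + sin \<theta>3 *\<^sub>R (G 5 ** G 6))
                   ** (cos \<theta>4 *\<^sub>R mat 1 + sin \<theta>4 *\<^sub>R (G 7 ** G 8))"
    and N_def: "N = \<alpha> *\<^sub>R (G 0 ** G 10) + \<beta> *\<^sub>R (G 9 ** G 10)"
    and P_def: "P = G 0 ** G 1 ** G 3 ** G 5 ** G 7 ** G 9"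
  shows
    "(N ** N = 0 \<and> L ** L = R2 ** (mat 1 + N) \<and> dim {v :: real^'n. N *v v = 0} = 16)
     \<and> (\<forall>\<epsilon> :: real^'n. (P *v \<epsilon> = \<epsilon> \<and> (L ** P ** matrix_inv L) *v \<epsilon> = \<epsilon>)
            \<longleftrightarrow> (P *v \<epsilon> = \<epsilon> \<and> R2 *v \<epsilon> = \<epsilon> \<and> N *v \<epsilon> = 0))
     \<and> (4 dvd dim {\<epsilon> :: real^'n. R2 *v \<epsilon> = \<epsilon>}
        \<and> real (dim {\<epsilon> :: real^'n. P *v \<epsilon> = \<epsilon> \<and> R2 *v \<epsilon> = \<epsilon> \<and> N *v \<epsilon> = 0})
            = real (dim {\<epsilon> :: real^'n. R2 *v \<epsilon> = \<epsilon>}) / 4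
        \<and> real (dim {\<epsilon> :: real^'n. R2 *v \<epsilon> = \<epsilon>}) / 4
            = real (dim {\<epsilon> :: real^'n. P *v \<epsilon> = \<epsilon> \<and> R2 *v \<epsilon> = \<epsilon>}) / 2)"
proof -
  define g where "g = (\<lambda>i. Em (G i))"
  have gE: "Em (G i) = g i" for i by (simp add: g_def)
  have rel: "g M * g N + g N * g M = (2 * eta M N) *\<^sub>R 1" if "M < 11" "N < 11" for M N
  proof -
    have "G M ** G N + G N ** G M = (2 * eta M N) *\<^sub>R mat 1"
      using rep that unfolding clifford_rep_def by blast
    then have "Em (G M ** G N + G N ** G M) = Em ((2 * eta M N) *\<^sub>R mat 1)" by simp
    then show ?thesis by (simp add: Em_add Em_mult Em_scaleR Em_one gE)
  qed
  interpret c: cliff g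
  proof
    fix i j :: nat assume h: "i < 11" "j < 11" "i \<noteq> j"
    then have "g i * g j + g j * g i = 0" using rel[of i j] by (simp add: eta_def)
    then show "g i * g j = - (g j * g i)" by (simp add: eq_neg_iff_add_eq_0)
  next
    show "g 0 * g 0 = -1" using dbl[OF rel[of 0 0]] by (simp add: eta_def)
  next
    fix i :: nat assume "0 < i" "i < 11"
    then show "g i * g i = 1" using dbl[OF rel[of i i]] by (simp add: eta_def)
  qed
  define X where "X = (\<theta>1/2) *\<^sub>R c.J1 + (\<theta>2/2) *\<^sub>R c.J2 + (\<theta>3/2) *\<^sub>R c.J3 + (\<theta>4/2) *\<^sub>R c.J4
     + (\<alpha>/2) *\<^sub>R c.n0 + (\<beta>/2) *\<^sub>R c.n9"
  define n where "n = \<alpha> *\<^sub>R c.n0 + \<beta> *\<^sub>R c.n9"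
  define Qa where "Qa = cos \<theta>1 *\<^sub>R 1 + sin \<theta>1 *\<^sub>R c.J1"
  define Qb where "Qb = cos \<theta>2 *\<^sub>R 1 + sin \<theta>2 *\<^sub>R c.J2"
  define Qc where "Qc = cos \<theta>3 *\<^sub>R 1 + sin \<theta>3 *\<^sub>R c.J3"
  define Qd where "Qd = cos \<theta>4 *\<^sub>R 1 + sin \<theta>4 *\<^sub>R c.J4"
  define Ia where "Ia = cos \<theta>1 *\<^sub>R 1 - sin \<theta>1 *\<^sub>R c.J1"
  define Ib where "Ib = cos \<theta>2 *\<^sub>R 1 - sin \<theta>2 *\<^sub>R c.J2"
  define Ic where "Ic = cos \<theta>3 *\<^sub>R 1 - sin \<theta>3 *\<^sub>R c.J3"
  define Id where "Id = cos \<theta>4 *\<^sub>R 1 - sin \<theta>4 *\<^sub>R c.J4"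
  define r where "r = Qa * Qb * Qc * Qd"
  define r' where "r' = Ia * Ib * Ic * Id"
  define l where "l = exp X"
  define l' where "l' = exp (- X)"
  have EL: "Em L = l" unfolding L_def l_def X_def
    by (simp add: Em_mexp Em_add Em_scaleR Em_mult gE c.defs)
  have ER: "Em R2 = r" unfolding R2_def r_def Qa_def Qb_def Qc_def Qd_def
    by (simp add: Em_add Em_scaleR Em_mult Em_one gE c.defs)
  have EN: "Em N = n" unfolding N_def n_def
    by (simp add: Em_add Em_scaleR Em_mult gE c.defs)
  have EP: "Em P = c.p" unfolding P_def
    by (simp add: Em_mult gE c.defs)
  have appE: "A *v v = app (Em A) v" for A v by simp
  have nn: "n * n = 0"
  proof -
    have "n * n = (\<alpha> * \<alpha>) *\<^sub>R (c.n0 * c.n0) + (\<alpha> * \<beta>) *\<^sub>R (c.n0 * c.n9 + c.n9 * c.n0) + (\<beta> * \<beta>) *\<^sub>R (c.n9 * c.n9)"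
      unfolding n_def by (simp add: algebra_simps)
    also have "\<dots> = (\<alpha> * \<alpha> - \<beta> * \<beta>) *\<^sub>R 1" by (simp add: c.nn algebra_simps)
    also have "\<dots> = 0" using ab by (simp add: power2_eq_square)
    finally show ?thesis .
  qed
  have XX: "X + X = \<theta>1 *\<^sub>R c.J1 + (\<theta>2 *\<^sub>R c.J2 + (\<theta>3 *\<^sub>R c.J3 + (\<theta>4 *\<^sub>R c.J4 + n)))"
    unfolding X_def n_def by (simp add: algebra_simps flip: scaleR_add_left)
  have ll: "l * l = r * (1 + n)"
  proof -
    have c4: "(\<theta>4 *\<^sub>R c.J4) * n = n * (\<theta>4 *\<^sub>R c.J4)" unfolding n_def by (simp add: algebra_simps c.Jn)
    have c3: "(\<theta>3 *\<^sub>R c.J3) * (\<theta>4 *\<^sub>R c.J4 + n) = (\<theta>4 *\<^sub>R c.J4 + n) * (\<theta>3 *\<^sub>R c.J3)"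
      unfolding n_def by (simp add: algebra_simps c.Jn c.Jcomm)
    have c2: "(\<theta>2 *\<^sub>R c.J2) * (\<theta>3 *\<^sub>R c.J3 + (\<theta>4 *\<^sub>R c.J4 + n)) = (\<theta>3 *\<^sub>R c.J3 + (\<theta>4 *\<^sub>R c.J4 + n)) * (\<theta>2 *\<^sub>R c.J2)"
      unfolding n_def by (simp add: algebra_simps c.Jn c.Jcomm)
    have c1: "(\<theta>1 *\<^sub>R c.J1) * (\<theta>2 *\<^sub>R c.J2 + (\<theta>3 *\<^sub>R c.J3 + (\<theta>4 *\<^sub>R c.J4 + n))) = (\<theta>2 *\<^sub>R c.J2 + (\<theta>3 *\<^sub>R c.J3 + (\<theta>4 *\<^sub>R c.J4 + n))) * (\<theta>1 *\<^sub>R c.J1)"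
      unfolding n_def by (simp add: algebra_simps c.Jn c.Jcomm)
    have "l * l = exp (X + X)" unfolding l_def by (simp add: exp_add_commuting)
    also have "\<dots> = exp (\<theta>1 *\<^sub>R c.J1) * (exp (\<theta>2 *\<^sub>R c.J2) * (exp (\<theta>3 *\<^sub>R c.J3) * (exp (\<theta>4 *\<^sub>R c.J4) * exp n)))"
      unfolding XX exp_add_commuting[OF c1] exp_add_commuting[OF c2] exp_add_commuting[OF c3] exp_add_commuting[OF c4] ..
    also have "\<dots> = Qa * (Qb * (Qc * (Qd * (1 + n))))"
      by (simp add: exp_J c.JJ exp_nil nn Qa_def Qb_def Qc_def Qd_def)
    finally show ?thesis by (simp add: r_def mult.assoc)
  qed
  have NN: "N ** N = 0" by (rule Em_inj) (simp add: Em_mult EN nn Em_zero)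
  have LL: "L ** L = R2 ** (mat 1 + N)" by (rule Em_inj) (simp add: Em_mult Em_add Em_one EL ER EN ll)
  define \<sigma> where "\<sigma> = \<beta> / \<alpha>"
  have bs: "\<beta> = \<sigma> * \<alpha>" using a0 by (simp add: \<sigma>_def)
  have b0: "\<beta> \<noteq> 0" using ab a0 by (metis power_zero_numeral zero_eq_power2)
  have ss: "\<sigma> * \<sigma> = 1" using ab a0 b0 by (simp add: \<sigma>_def power2_eq_square field_simps)
  define K' where "K' = \<sigma> *\<^sub>R c.K"
  have K'K': "K' * K' = 1" by (simp add: K'_def c.KJ ss)
  have kern: "app n v = 0 \<longleftrightarrow> app K' v = v" for v
  proof -
    have e: "g 10 * (g 0 * n) = \<alpha> *\<^sub>R (K' - 1)"
      unfolding n_def K'_def using c.kerN[of "\<alpha>" "\<beta>"] by (simp add: bs algebra_simps)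
    have bk: "n = - (g 0 * (g 10 * (g 10 * (g 0 * n))))" by (simp add: c.sq' c.sq0')
    show ?thesis
    proof
      assume "app n v = 0"
      then have "app (g 10 * (g 0 * n)) v = 0" by simp
      then have "\<alpha> *\<^sub>R (app K' v - v) = 0" unfolding e by simp
      then show "app K' v = v" using a0 by simp
    next
      assume "app K' v = v"
      then have "app (g 10 * (g 0 * n)) v = 0" unfolding e by simp
      then show "app n v = 0" by (subst bk) (simp del: app_mult add: app_mult[symmetric] mult.assoc[symmetric], simp)
    qed
  qed
  have dimN: "dim {v :: real^'n. N *v v = 0} = 16"
  proof -
    have "2 * dim {v \<in> UNIV. app K' v = v} = dim (UNIV :: (real^'n) set)"
      by (rule dim_split[where A="g 0" and c="-1"]) (simp_all add: K'K' c.KJ K'_def ss)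
    moreover have "{v :: real^'n. N *v v = 0} = {v \<in> UNIV. app K' v = v}" by (simp only: appE EN kern simp_thms) simp
    ultimately show ?thesis using dim32 by simp
  qed
  have ll': "l * l' = 1" unfolding l_def l'_def by (rule exp_minus_inverse)
  have l'l: "l' * l = 1" unfolding l_def l'_def using exp_minus_inverse[of "- X"] by simp
  have Linv: "Em (matrix_inv L) = l'"
  proof -
    have ex: "L ** Fm l' = mat 1 \<and> Fm l' ** L = mat 1"
      by (intro conjI; rule Em_inj) (simp_all add: Em_mult EL ll' l'l Em_one)
    then have "L ** matrix_inv L = mat 1 \<and> matrix_inv L ** L = mat 1"
      unfolding matrix_inv_def by (rule someI)
    then have m: "Em L * Em (matrix_inv L) = 1" "Em (matrix_inv L) * Em L = 1"
      by (simp_all flip: Em_mult Em_one)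
    have "Em (matrix_inv L) = Em (matrix_inv L) * (l * l')" by (simp add: ll')
    also have "\<dots> = (Em (matrix_inv L) * l) * l'" by (simp add: mult.assoc)
    also have "\<dots> = l'" using m(2) EL by simp
    finally show ?thesis .
  qed
  have pX: "c.p * X = (- X) * c.p"
    unfolding X_def by (simp add: algebra_simps c.pJ c.pn)
  have pl: "c.p * l = l' * c.p" unfolding l_def l'_def by (rule exp_conj[OF pX])
  have pl': "c.p * l' = l * c.p" unfolding l_def l'_def by (rule exp_conj) (simp add: pX)
  have conjP: "Em (L ** P ** matrix_inv L) = r * (1 + n) * c.p"
  proof -
    have "Em (L ** P ** matrix_inv L) = l * c.p * l'" by (simp add: Em_mult EL EP Linv)
    also have "\<dots> = l * l * c.p" by (simp add: mult.assoc pl')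
    finally show ?thesis by (simp add: ll)
  qed
  have pn: "c.p * n = - n * c.p" unfolding n_def by (simp add: algebra_simps c.pn)
  have pQ: "c.p * Qa = Ia * c.p" "c.p * Qb = Ib * c.p" "c.p * Qc = Ic * c.p" "c.p * Qd = Id * c.p"
    unfolding Qa_def Qb_def Qc_def Qd_def Ia_def Ib_def Ic_def Id_def
    by (simp_all add: acomm_rot c.pJ)
  have pr: "c.p * r = r' * c.p"
    unfolding r_def r'_def by (simp add: mult.assoc[symmetric] pQ(1)) (simp add: mult.assoc pQ)
  have QI: "Qa * Ia = 1" "Qb * Ib = 1" "Qc * Ic = 1" "Qd * Id = 1"
    "Ia * Qa = 1" "Ib * Qb = 1" "Ic * Qc = 1" "Id * Qd = 1"
    unfolding Qa_def Qb_def Qc_def Qd_def Ia_def Ib_def Ic_def Id_def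
    by (simp_all add: rot_inv c.JJ)
  have QIc: "Qb * Ia = Ia * Qb" "Qc * Ia = Ia * Qc" "Qd * Ia = Ia * Qd"
    "Qc * Ib = Ib * Qc" "Qd * Ib = Ib * Qd" "Qd * Ic = Ic * Qd"
    "Ib * Qa = Qa * Ib" "Ic * Qa = Qa * Ic" "Id * Qa = Qa * Id"
    "Ic * Qb = Qb * Ic" "Id * Qb = Qb * Id" "Id * Qc = Qc * Id"
    unfolding Qa_def Qb_def Qc_def Qd_def Ia_def Ib_def Ic_def Id_def
    by (rule rot_comm(1) rot_comm(2) rot_comm(3); simp add: c.Jcomm)+
  have QIc2: "Qb * (Ia * x) = Ia * (Qb * x)" "Qc * (Ia * x) = Ia * (Qc * x)" "Qd * (Ia * x) = Ia * (Qd * x)"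
    "Qc * (Ib * x) = Ib * (Qc * x)" "Qd * (Ib * x) = Ib * (Qd * x)" "Qd * (Ic * x) = Ic * (Qd * x)"
    "Ib * (Qa * x) = Qa * (Ib * x)" "Ic * (Qa * x) = Qa * (Ic * x)" "Id * (Qa * x) = Qa * (Id * x)"
    "Ic * (Qb * x) = Qb * (Ic * x)" "Id * (Qb * x) = Qb * (Id * x)" "Id * (Qc * x) = Qc * (Id * x)" for x
    by (simp_all add: mult.assoc[symmetric] QIc)
  have QI2: "Qa * (Ia * x) = x" "Qb * (Ib * x) = x" "Qc * (Ic * x) = x" "Qd * (Id * x) = x"
    "Ia * (Qa * x) = x" "Ib * (Qb * x) = x" "Ic * (Qc * x) = x" "Id * (Qd * x) = x" for x
    by (simp_all add: mult.assoc[symmetric] QI)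
  have rr': "r * r' = 1" unfolding r_def r'_def by (simp add: mult.assoc QIc2 QI2 QI)
  have r'r: "r' * r = 1" unfolding r_def r'_def by (simp add: mult.assoc QIc2 QI2 QI)
  have rot_inv_all: "invar B r" if "goodform B" "invar B c.J1" "invar B c.J2" "invar B c.J3" "invar B c.J4" for B
    unfolding r_def Qa_def Qb_def Qc_def Qd_def using that
    by (intro invar_mult invar_rot; simp add: c.JJ)
  obtain B where B: "goodform B" "invar B r"
    using form_exists[OF c.JJ c.Jcomm] rot_inv_all by blast
  have part2: "(app c.p e = e \<and> app (r * (1 + n) * c.p) e = e) \<longleftrightarrow> (app c.p e = e \<and> app r e = e \<and> app n e = 0)" for e
  proof (intro iffI)
    assume "app c.p e = e \<and> app r e = e \<and> app n e = 0"
    then show "app c.p e = e \<and> app (r * (1 + n) * c.p) e = e" by simp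
  next
    assume h: "app c.p e = e \<and> app (r * (1 + n) * c.p) e = e"
    then have pe: "app c.p e = e" by simp
    have re: "app r (e + app n e) = e" using h[THEN conjunct2] pe by simp
    define d where "d = app n e"
    have "app c.p (app r (e + d)) = e" using re pe by (simp add: d_def)
    moreover have "app c.p (app r (e + d)) = app r' (e - d)"
    proof -
      have "app c.p (app r (e + d)) = app (c.p * r) (e + d)" by simp
      also have "\<dots> = app r' (app c.p e + app (c.p * n) e)" by (simp add: pr d_def)
      also have "\<dots> = app r' (e - d)" by (simp add: pn pe d_def)
      finally show ?thesis .
    qed
    ultimately have "app r' (e - d) = e" by simp
    then have "app r (app r' (e - d)) = app r e" by simp
    then have red: "app r e = e - d" by (simp flip: app_mult add: rr')
    have rd: "app r d = d" using re red by (simp add: d_def algebra_simps)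
    have "d = 0" by (rule form_kill[OF B red rd])
    then show "app c.p e = e \<and> app r e = e \<and> app n e = 0" using pe red d_def by simp
  qed
  have P2: "\<forall>\<epsilon> :: real^'n. (P *v \<epsilon> = \<epsilon> \<and> (L ** P ** matrix_inv L) *v \<epsilon> = \<epsilon>)
            \<longleftrightarrow> (P *v \<epsilon> = \<epsilon> \<and> R2 *v \<epsilon> = \<epsilon> \<and> N *v \<epsilon> = 0)"
    by (simp only: appE EP conjP ER EN part2 simp_thms)
  have comm_r: "x * r = r * x" if "x * c.J1 = c.J1 * x" "x * c.J2 = c.J2 * x" "x * c.J3 = c.J3 * x" "x * c.J4 = c.J4 * x" for x
    unfolding r_def Qa_def Qb_def Qc_def Qd_def using that
    by (intro comm_mul comm_rot)
  have rp: "r * c.p = c.p * r'"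
  proof -
    have "r * c.p = (c.p * c.p) * r * c.p" by (simp add: c.pp)
    also have "\<dots> = c.p * (c.p * r) * c.p" by (simp add: mult.assoc)
    also have "\<dots> = c.p * r' * (c.p * c.p)" by (simp add: pr mult.assoc)
    also have "\<dots> = c.p * r'" by (simp add: c.pp)
    finally show ?thesis .
  qed
  define D0 where "D0 = {v :: real^'n. app r v = v}"
  define Dp where "Dp = {v \<in> D0. app c.p v = v}"
  have r'fix: "app r' v = v" if "v \<in> D0" for v
  proof -
    have "app r' (app r v) = v" by (simp flip: app_mult add: r'r)
    then show ?thesis using that by (simp add: D0_def)
  qed
  have g9r: "g 9 * r = r * g 9" by (rule comm_r) (simp_all add: c.g9J)
  have Kr: "K' * r = r * K'" unfolding K'_def by (rule comm_r) (simp_all add: c.KJ)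
  have A3r: "c.A3 * r = r * c.A3" by (rule comm_r) (simp_all add: c.A3J)
  have fixc: "app x v \<in> D0" if "x * r = r * x" "v \<in> D0" for x v
  proof -
    have "app r (app x v) = app (r * x) v" by simp
    also have "\<dots> = app x v" using that by (simp add: D0_def flip: that(1))
    finally show ?thesis by (simp add: D0_def)
  qed
  have subD0: "subspace D0" unfolding D0_def by (rule sub_fix)
  have subDp: "subspace Dp" unfolding Dp_def D0_def subspace_def by simp
  have d1: "2 * dim Dp = dim D0" unfolding Dp_def
  proof (rule dim_split[where A="g 9" and c=1, OF subD0])
    fix v assume v: "v \<in> D0"
    show "app c.p v \<in> D0"
    proof -
      have "app r (app c.p v) = app (r * c.p) v" by simp
      also have "\<dots> = app c.p (app r' v)" by (simp add: rp)
      also have "\<dots> = app c.p v" using r'fix[OF v] by simp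
      finally show ?thesis by (simp add: D0_def)
    qed
    show "app (g 9) v \<in> D0" by (rule fixc[OF g9r v])
  qed (simp_all add: c.pp c.g9J)
  have d2: "2 * dim {v \<in> Dp. app K' v = v} = dim Dp"
  proof (rule dim_split[where A="c.A3" and c=1, OF subDp])
    fix v assume v: "v \<in> Dp"
    have pK: "c.p * K' = K' * c.p" unfolding K'_def by (simp add: c.KJ)
    have pA: "c.p * c.A3 = c.A3 * c.p" by (simp add: c.A3J)
    show "app K' v \<in> Dp"
    proof -
      have e: "app c.p (app K' v) = app K' (app c.p v)" by (metis app_mult pK)
      show ?thesis using v fixc[OF Kr] e unfolding Dp_def by simp
    qed
    show "app c.A3 v \<in> Dp"
    proof -
      have e: "app c.p (app c.A3 v) = app c.A3 (app c.p v)" by (metis app_mult pA)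
      show ?thesis using v fixc[OF A3r] e unfolding Dp_def by simp
    qed
  qed (simp_all add: K'K' c.A3J K'_def c.KJ ss)
  have S1: "{\<epsilon> :: real^'n. R2 *v \<epsilon> = \<epsilon>} = D0" by (simp only: appE ER D0_def)
  have S2: "{\<epsilon> :: real^'n. P *v \<epsilon> = \<epsilon> \<and> R2 *v \<epsilon> = \<epsilon>} = Dp"
    unfolding Dp_def D0_def by (simp only: appE ER EP) auto
  have S3: "{\<epsilon> :: real^'n. P *v \<epsilon> = \<epsilon> \<and> R2 *v \<epsilon> = \<epsilon> \<and> N *v \<epsilon> = 0} = {v \<in> Dp. app K' v = v}"
    unfolding Dp_def D0_def by (simp only: appE ER EP EN kern) auto
  have e: "dim D0 = 4 * dim {v \<in> Dp. app K' v = v}" using d1 d2 by linarith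
  have P3: "4 dvd dim D0" using e by simp
  have P4: "real (dim {v \<in> Dp. app K' v = v}) = real (dim D0) / 4" using e by simp
  have P5: "real (dim D0) / 4 = real (dim Dp) / 2" using d1 by (simp flip: d1)
  show ?thesis using NN LL dimN P2 P3 P4 P5 unfolding S1 S2 S3 by blast
qed


end
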